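(* Let $G$ be a connected graph and let $H$ be a hypergraph of degree 2. If $G^d$ is a hypergraph dilution of $H$, then $G$ is a minor of $H^d$.
   Context: A hypergraph $H$ is a pair $(V(H),E(H))$ with $E(H)\subseteq 2^{V(H)}$ a set; graphs are hypergraphs all of whose edges have size 2. For a vertex $v$, $I_v$ is the set of edges containing $v$; the degree of $H$ is $\max_v|I_v|$. The dual $H^d$ has $V(H^d)=E(H)$ and $E(H^d)=\{I_v : v\in V(H)\}$. A graph $G$ is a minor of a hypergraph $F$ if it is a minor of the primal graph of $F$ (vertices $V(F)$, $x,y$ adjacent iff some edge of $F$ contains both), i.e., there is $\mu:V(G)\to 2^{V(F)}$ with each $\mu(v)$ connected, the $\mu(v)$ pairwise disjoint, and for adjacent $u,v$ some primal edge joining $\mu(u)$ and $\mu(v)$. $H$ is a hypergraph dilution of $H'$ if $H$ is isomorphic to a hypergraph reachable from $H'$ by a finite sequence of: deleting a vertex (from the vertex set and all edges); deleting an edge that is a proper subset of another edge; merging on a vertex $v$, i.e., replacing all edges of $I_v$ by $(\bigcup I_v)\setminus\{v\}$. *)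

theory Defs
  imports Main
begin

type_synonym 'a hypergraph = "'a set \<times> 'a set set"

definition hverts :: "'a hypergraph \<Rightarrow> 'a set" where "hverts H = fst H"
definition hedges :: "'a hypergraph \<Rightarrow> 'a set set" where "hedges H = snd H"

definition is_hypergraph :: "'a hypergraph \<Rightarrow> bool" where
  "is_hypergraph H \<longleftrightarrow> finite (hverts H) \<and> hedges H \<subseteq> Pow (hverts H)"

definition is_graph :: "'a hypergraph \<Rightarrow> bool" where
  "is_graph G \<longleftrightarrow> is_hypergraph G \<and> (\<forall>e\<in>hedges G. card e = 2)"

definition inc :: "'a hypergraph \<Rightarrow> 'a \<Rightarrow> 'a set set" where
  "inc H v = {e \<in> hedges H. v \<in> e}"

definition hdegree :: "'a hypergraph \<Rightarrow> nat" where
  "hdegree H = Max ((\<lambda>v. card (inc H v)) ` hverts H)"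

definition hdual :: "'a hypergraph \<Rightarrow> 'a set hypergraph" where
  "hdual H = (hedges H, inc H ` hverts H)"

definition primal_adj :: "'a hypergraph \<Rightarrow> 'a \<Rightarrow> 'a \<Rightarrow> bool" where
  "primal_adj F x y \<longleftrightarrow> x \<in> hverts F \<and> y \<in> hverts F \<and> x \<noteq> y \<and>
     (\<exists>e\<in>hedges F. x \<in> e \<and> y \<in> e)"

definition primal_connected_set :: "'a hypergraph \<Rightarrow> 'a set \<Rightarrow> bool" where
  "primal_connected_set F S \<longleftrightarrow> S \<noteq> {} \<and> S \<subseteq> hverts F \<and>
     (\<forall>x\<in>S. \<forall>y\<in>S. (\<lambda>a b. primal_adj F a b \<and> a \<in> S \<and> b \<in> S)\<^sup>*\<^sup>* x y)"

definition graph_connected :: "'a hypergraph \<Rightarrow> bool" where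
  "graph_connected G \<longleftrightarrow> primal_connected_set G (hverts G)"

definition is_minor :: "'b hypergraph \<Rightarrow> 'a hypergraph \<Rightarrow> bool" where
  "is_minor G F \<longleftrightarrow> (\<exists>\<mu> :: 'b \<Rightarrow> 'a set.
     (\<forall>v\<in>hverts G. primal_connected_set F (\<mu> v)) \<and>
     (\<forall>u\<in>hverts G. \<forall>v\<in>hverts G. u \<noteq> v \<longrightarrow> \<mu> u \<inter> \<mu> v = {}) \<and>
     (\<forall>u v. primal_adj G u v \<longrightarrow> (\<exists>x\<in>\<mu> u. \<exists>y\<in>\<mu> v. primal_adj F x y)))"

inductive dilution_step :: "'a hypergraph \<Rightarrow> 'a hypergraph \<Rightarrow> bool" where
  del_vertex: "v \<in> hverts H \<Longrightarrow>
     dilution_step H (hverts H - {v}, (\<lambda>e. e - {v}) ` hedges H)"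
| del_edge: "e \<in> hedges H \<Longrightarrow> e' \<in> hedges H \<Longrightarrow> e \<subset> e' \<Longrightarrow>
     dilution_step H (hverts H, hedges H - {e})"
| merge: "v \<in> hverts H \<Longrightarrow>
     dilution_step H (hverts H, (hedges H - inc H v) \<union> {\<Union>(inc H v) - {v}})"

definition hiso :: "'a hypergraph \<Rightarrow> 'b hypergraph \<Rightarrow> bool" where
  "hiso H1 H2 \<longleftrightarrow> (\<exists>f. bij_betw f (hverts H1) (hverts H2) \<and>
     hedges H2 = (\<lambda>e. f ` e) ` hedges H1)"

definition is_dilution :: "'b hypergraph \<Rightarrow> 'a hypergraph \<Rightarrow> bool" where
  "is_dilution H H' \<longleftrightarrow> (\<exists>K. dilution_step\<^sup>*\<^sup>* H' K \<and> hiso H K)"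

end

theory Submission
  imports Defs
begin

definition dinv :: "'a hypergraph \<Rightarrow> 'a hypergraph \<Rightarrow> ('a set \<Rightarrow> 'a set set) \<Rightarrow> bool" where
 "dinv H K M \<longleftrightarrow> (\<forall>f\<in>hedges K. f \<noteq> {} \<longrightarrow> primal_connected_set (hdual H) (M f)) \<and>
   (\<forall>f\<in>hedges K. \<forall>g\<in>hedges K. f \<noteq> {} \<longrightarrow> g \<noteq> {} \<longrightarrow> f \<noteq> g \<longrightarrow> M f \<inter> M g = {}) \<and>
   (\<forall>f\<in>hedges K. \<forall>g\<in>hedges K. f \<noteq> g \<longrightarrow> f \<inter> g \<noteq> {} \<longrightarrow>
       (\<exists>x\<in>M f. \<exists>y\<in>M g. primal_adj (hdual H) x y))"

lemma hdual_simps[simp]: "hverts (hdual H) = hedges H" "hedges (hdual H) = inc H ` hverts H"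
  by (auto simp: hdual_def hverts_def hedges_def)

lemma conn_mono:
  assumes "(\<lambda>a b. P a b \<and> a \<in> S \<and> b \<in> S)\<^sup>*\<^sup>* x y" "S \<subseteq> T"
  shows "(\<lambda>a b. P a b \<and> a \<in> T \<and> b \<in> T)\<^sup>*\<^sup>* x y"
proof -
  have "(\<lambda>a b. P a b \<and> a \<in> S \<and> b \<in> S) \<le> (\<lambda>a b. P a b \<and> a \<in> T \<and> b \<in> T)"
    using assms(2) by auto
  from predicate2D[OF rtranclp_mono[OF this] assms(1)] show ?thesis .
qed

lemma union_conn:
  assumes "I \<noteq> {}" "\<forall>f\<in>I. primal_connected_set F (M f)"
    "\<forall>f1\<in>I. \<forall>f2\<in>I. f1 \<noteq> f2 \<longrightarrow> (\<exists>x\<in>M f1. \<exists>y\<in>M f2. primal_adj F x y)"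
  shows "primal_connected_set F (\<Union>(M ` I))"
proof -
  define T where "T = \<Union>(M ` I)"
  define R where "R = (\<lambda>a b. primal_adj F a b \<and> a \<in> T \<and> b \<in> T)"
  have sub: "M f \<subseteq> T" if "f \<in> I" for f using that unfolding T_def by blast
  have inner: "R\<^sup>*\<^sup>* x y" if a: "f \<in> I" "x \<in> M f" "y \<in> M f" for f x y
  proof -
    have "primal_connected_set F (M f)" using assms(2) a(1) by blast
    then have "\<forall>x\<in>M f. \<forall>y\<in>M f. (\<lambda>a b. primal_adj F a b \<and> a \<in> M f \<and> b \<in> M f)\<^sup>*\<^sup>* x y"
      unfolding primal_connected_set_def by (elim conjE)
    then have "(\<lambda>a b. primal_adj F a b \<and> a \<in> M f \<and> b \<in> M f)\<^sup>*\<^sup>* x y"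
      using a(2,3) by blast
    from conn_mono[OF this sub[OF a(1)]] show ?thesis unfolding R_def .
  qed
  have conn: "R\<^sup>*\<^sup>* x y" if xyT: "x \<in> T" "y \<in> T" for x y
  proof -
    obtain f1 where f1: "f1 \<in> I" "x \<in> M f1" using xyT(1) unfolding T_def by blast
    obtain f2 where f2: "f2 \<in> I" "y \<in> M f2" using xyT(2) unfolding T_def by blast
    show ?thesis
    proof (cases "f1 = f2")
      case True then show ?thesis using inner[OF f1] f2 by simp
    next
      case False
      then obtain x' y' where xy: "x' \<in> M f1" "y' \<in> M f2" "primal_adj F x' y'"
        using assms(3) f1(1) f2(1) by blast
      have 1: "R\<^sup>*\<^sup>* x x'" using inner[OF f1 xy(1)] .
      have 2: "R x' y'" unfolding R_def using xy sub[OF f1(1)] sub[OF f2(1)] by blast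
      have 3: "R\<^sup>*\<^sup>* y' y" using inner[OF f2(1) xy(2) f2(2)] .
      have "R\<^sup>*\<^sup>* x y'" using rtranclp.rtrancl_into_rtrancl[OF 1 2] .
      then show ?thesis using rtranclp_trans[OF _ 3] by blast
    qed
  qed
  have ne: "T \<noteq> {}"
  proof -
    obtain f where "f \<in> I" using assms(1) by blast
    then have "M f \<noteq> {}" using assms(2) unfolding primal_connected_set_def by blast
    then show ?thesis using sub[OF \<open>f \<in> I\<close>] by blast
  qed
  have sv: "T \<subseteq> hverts F" using assms(2) unfolding primal_connected_set_def T_def by blast
  show ?thesis unfolding primal_connected_set_def
    using ne sv conn unfolding T_def R_def by blast
qed

lemma dinv_base:
  assumes "is_hypergraph H"
  shows "dinv H H (\<lambda>f. {f})"
proof -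
  have c: "primal_connected_set (hdual H) {f}" if "f \<in> hedges H" for f
    using that unfolding primal_connected_set_def by auto
  have a: "primal_adj (hdual H) f g" if "f \<in> hedges H" "g \<in> hedges H" "f \<noteq> g" "w \<in> f" "w \<in> g" for f g w
  proof -
    have "w \<in> hverts H" using assms that unfolding is_hypergraph_def by auto
    moreover have "f \<in> inc H w" "g \<in> inc H w" using that by (auto simp: inc_def)
    ultimately show ?thesis using that unfolding primal_adj_def by auto
  qed
  show ?thesis unfolding dinv_def using c a by blast
qed

lemma dinvD:
  assumes "dinv H K M"
  shows "\<And>f. f \<in> hedges K \<Longrightarrow> f \<noteq> {} \<Longrightarrow> primal_connected_set (hdual H) (M f)"
    and "\<And>f g. f \<in> hedges K \<Longrightarrow> g \<in> hedges K \<Longrightarrow> f \<noteq> {} \<Longrightarrow> g \<noteq> {} \<Longrightarrow> f \<noteq> g \<Longrightarrow> M f \<inter> M g = {}"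
    and "\<And>f g. f \<in> hedges K \<Longrightarrow> g \<in> hedges K \<Longrightarrow> f \<noteq> g \<Longrightarrow> f \<inter> g \<noteq> {} \<Longrightarrow>
       \<exists>x\<in>M f. \<exists>y\<in>M g. primal_adj (hdual H) x y"
proof -
  have D: "(\<forall>f\<in>hedges K. f \<noteq> {} \<longrightarrow> primal_connected_set (hdual H) (M f)) \<and>
   (\<forall>f\<in>hedges K. \<forall>g\<in>hedges K. f \<noteq> {} \<longrightarrow> g \<noteq> {} \<longrightarrow> f \<noteq> g \<longrightarrow> M f \<inter> M g = {}) \<and>
   (\<forall>f\<in>hedges K. \<forall>g\<in>hedges K. f \<noteq> g \<longrightarrow> f \<inter> g \<noteq> {} \<longrightarrow>
       (\<exists>x\<in>M f. \<exists>y\<in>M g. primal_adj (hdual H) x y))"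
    using assms unfolding dinv_def .
  show "\<And>f. f \<in> hedges K \<Longrightarrow> f \<noteq> {} \<Longrightarrow> primal_connected_set (hdual H) (M f)"
    by (rule conjunct1[OF D, rule_format])
  show "\<And>f g. f \<in> hedges K \<Longrightarrow> g \<in> hedges K \<Longrightarrow> f \<noteq> {} \<Longrightarrow> g \<noteq> {} \<Longrightarrow> f \<noteq> g \<Longrightarrow> M f \<inter> M g = {}"
    by (rule conjunct1[OF conjunct2[OF D], rule_format])
  show "\<And>f g. f \<in> hedges K \<Longrightarrow> g \<in> hedges K \<Longrightarrow> f \<noteq> g \<Longrightarrow> f \<inter> g \<noteq> {} \<Longrightarrow>
       \<exists>x\<in>M f. \<exists>y\<in>M g. primal_adj (hdual H) x y"
    by (rule conjunct2[OF conjunct2[OF D], rule_format])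
qed

lemma dinvI:
  assumes a1: "\<And>f. f \<in> hedges K \<Longrightarrow> f \<noteq> {} \<Longrightarrow> primal_connected_set (hdual H) (M f)"
    and a2: "\<And>f g. f \<in> hedges K \<Longrightarrow> g \<in> hedges K \<Longrightarrow> f \<noteq> {} \<Longrightarrow> g \<noteq> {} \<Longrightarrow> f \<noteq> g \<Longrightarrow> M f \<inter> M g = {}"
    and a3: "\<And>f g. f \<in> hedges K \<Longrightarrow> g \<in> hedges K \<Longrightarrow> f \<noteq> g \<Longrightarrow> f \<inter> g \<noteq> {} \<Longrightarrow>
       \<exists>x\<in>M f. \<exists>y\<in>M g. primal_adj (hdual H) x y"
  shows "dinv H K M"
  unfolding dinv_def
proof (intro conjI ballI impI)
  fix f assume "f \<in> hedges K" "f \<noteq> {}"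
  then show "primal_connected_set (hdual H) (M f)" by (rule a1)
next
  fix f g assume "f \<in> hedges K" "g \<in> hedges K" "f \<noteq> {}" "g \<noteq> {}" "f \<noteq> g"
  then show "M f \<inter> M g = {}" by (rule a2)
next
  fix f g assume "f \<in> hedges K" "g \<in> hedges K" "f \<noteq> g" "f \<inter> g \<noteq> {}"
  then show "\<exists>x\<in>M f. \<exists>y\<in>M g. primal_adj (hdual H) x y" by (rule a3)
qed

lemma dinv_step:
  assumes "dinv H K M" "dilution_step K K'"
  shows "\<exists>M'. dinv H K' M'"
  using assms(2)
proof cases
  case (del_vertex v)
  note d1 = dinvD(1)[OF assms(1)] and d2 = dinvD(2)[OF assms(1)] and d3 = dinvD(3)[OF assms(1)]
  have E': "hedges K' = (\<lambda>e. e - {v}) ` hedges K" using del_vertex by (simp add: hedges_def)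
  define pick where "pick g = (SOME f. f \<in> hedges K \<and> f - {v} = g)" for g
  have pk: "pick g \<in> hedges K \<and> pick g - {v} = g" if gK: "g \<in> hedges K'" for g
  proof -
    have "\<exists>f. f \<in> hedges K \<and> f - {v} = g" using gK unfolding E' by blast
    then show ?thesis unfolding pick_def by (rule someI_ex)
  qed
  have "dinv H K' (\<lambda>g. M (pick g))"
  proof (rule dinvI)
    fix f assume h: "f \<in> hedges K'" "f \<noteq> {}"
    have "pick f \<in> hedges K" "pick f \<noteq> {}" using pk[OF h(1)] h(2) by auto
    then show "primal_connected_set (hdual H) (M (pick f))" by (rule d1)
  next
    fix f g assume h: "f \<in> hedges K'" "g \<in> hedges K'" "f \<noteq> {}" "g \<noteq> {}" "f \<noteq> g"
    have p: "pick f \<in> hedges K" "pick g \<in> hedges K" "pick f \<noteq> {}" "pick g \<noteq> {}" "pick f \<noteq> pick g"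
      using pk[OF h(1)] pk[OF h(2)] h(3,4,5) by auto
    show "M (pick f) \<inter> M (pick g) = {}" by (rule d2[OF p])
  next
    fix f g assume h: "f \<in> hedges K'" "g \<in> hedges K'" "f \<noteq> g" "f \<inter> g \<noteq> {}"
    have p: "pick f \<in> hedges K" "pick g \<in> hedges K" "pick f \<noteq> pick g" "pick f \<inter> pick g \<noteq> {}"
      using pk[OF h(1)] pk[OF h(2)] h(3,4) by auto
    show "\<exists>x\<in>M (pick f). \<exists>y\<in>M (pick g). primal_adj (hdual H) x y" by (rule d3[OF p])
  qed
  then show ?thesis by blast
next
  case (del_edge e e')
  note d1 = dinvD(1)[OF assms(1)] and d2 = dinvD(2)[OF assms(1)] and d3 = dinvD(3)[OF assms(1)]
  have sub: "hedges K' \<subseteq> hedges K" using del_edge by (auto simp: hedges_def)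
  have "dinv H K' M"
  proof (rule dinvI)
    fix f assume "f \<in> hedges K'" "f \<noteq> {}"
    then show "primal_connected_set (hdual H) (M f)" using d1 sub by blast
  next
    fix f g assume h: "f \<in> hedges K'" "g \<in> hedges K'" "f \<noteq> {}" "g \<noteq> {}" "f \<noteq> g"
    show "M f \<inter> M g = {}" using d2[OF subsetD[OF sub h(1)] subsetD[OF sub h(2)] h(3,4,5)] .
  next
    fix f g assume h: "f \<in> hedges K'" "g \<in> hedges K'" "f \<noteq> g" "f \<inter> g \<noteq> {}"
    show "\<exists>x\<in>M f. \<exists>y\<in>M g. primal_adj (hdual H) x y"
      using d3[OF subsetD[OF sub h(1)] subsetD[OF sub h(2)] h(3,4)] .
  qed
  then show ?thesis by blast
next
  case (merge v)
  note d1 = dinvD(1)[OF assms(1)] and d2 = dinvD(2)[OF assms(1)] and d3 = dinvD(3)[OF assms(1)]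
  define I where "I = inc K v"
  define fs where "fs = \<Union>I - {v}"
  have E': "hedges K' = (hedges K - I) \<union> {fs}"
    using merge unfolding I_def fs_def by (simp add: hedges_def)
  have IE: "\<And>f. f \<in> I \<Longrightarrow> f \<in> hedges K" by (simp add: I_def inc_def)
  have Iv: "\<And>f. f \<in> I \<Longrightarrow> v \<in> f" by (simp add: I_def inc_def)
  define M' where "M' g = (if g \<in> hedges K - I then M g else \<Union>(M ` I))" for g
  have unc: "primal_connected_set (hdual H) (\<Union>(M ` I))" if fne: "fs \<noteq> {}"
  proof (rule union_conn)
    show "I \<noteq> {}" using fne unfolding fs_def by auto
    show "\<forall>f\<in>I. primal_connected_set (hdual H) (M f)"
    proof
      fix f assume "f \<in> I"
      then show "primal_connected_set (hdual H) (M f)" using d1[OF IE] Iv by blast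
    qed
    show "\<forall>f1\<in>I. \<forall>f2\<in>I. f1 \<noteq> f2 \<longrightarrow> (\<exists>x\<in>M f1. \<exists>y\<in>M f2. primal_adj (hdual H) x y)"
    proof (intro ballI impI)
      fix f1 f2 assume a: "f1 \<in> I" "f2 \<in> I" "f1 \<noteq> f2"
      have "v \<in> f1 \<inter> f2" using Iv[OF a(1)] Iv[OF a(2)] by blast
      then have "f1 \<inter> f2 \<noteq> {}" by blast
      then show "\<exists>x\<in>M f1. \<exists>y\<in>M f2. primal_adj (hdual H) x y"
        using d3[OF IE[OF a(1)] IE[OF a(2)] a(3)] by blast
    qed
  qed
  have adjU: "\<exists>x\<in>M g. \<exists>y\<in>\<Union>(M ` I). primal_adj (hdual H) x y"
    if gh: "g \<in> hedges K - I" "g \<inter> fs \<noteq> {}" for g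
  proof -
    obtain w f where wf: "w \<in> g" "f \<in> I" "w \<in> f" using gh(2) unfolding fs_def by blast
    have gf: "g \<noteq> f" using gh(1) wf(2) by blast
    have "g \<inter> f \<noteq> {}" using wf by blast
    then obtain x y where "x \<in> M g" "y \<in> M f" "primal_adj (hdual H) x y"
      using d3[OF _ IE[OF wf(2)] gf] gh(1) by blast
    then show ?thesis using wf(2) by blast
  qed
  have adj_sym: "\<And>x y. primal_adj (hdual H) x y \<Longrightarrow> primal_adj (hdual H) y x"
    unfolding primal_adj_def by blast
  have Mfs: "M' g = \<Union>(M ` I)" if "g \<in> hedges K'" "g \<notin> hedges K - I" for g
    using that unfolding M'_def by auto
  have Mo: "M' g = M g" if "g \<in> hedges K - I" for g
    using that unfolding M'_def by simp
  have "dinv H K' M'"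
  proof (rule dinvI)
    fix f assume h: "f \<in> hedges K'" "f \<noteq> {}"
    show "primal_connected_set (hdual H) (M' f)"
    proof (cases "f \<in> hedges K - I")
      case True then show ?thesis using Mo d1 h(2) by simp
    next
      case False
      then have "f = fs" using h(1) E' by blast
      then show ?thesis using Mfs[OF h(1) False] unc h(2) by simp
    qed
  next
    fix f g assume h: "f \<in> hedges K'" "g \<in> hedges K'" "f \<noteq> {}" "g \<noteq> {}" "f \<noteq> g"
    have dU: "M a \<inter> \<Union>(M ` I) = {}" if a: "a \<in> hedges K - I" "a \<noteq> {}" for a
    proof -
      have "M a \<inter> M b = {}" if b: "b \<in> I" for b
      proof -
        have "a \<noteq> b" using a(1) b by blast
        moreover have "b \<noteq> {}" using Iv[OF b] by blast
        ultimately show ?thesis using d2[OF _ IE[OF b]] a by blast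
      qed
      then show ?thesis by blast
    qed
    show "M' f \<inter> M' g = {}"
    proof (cases "f \<in> hedges K - I")
      case fT: True
      show ?thesis
      proof (cases "g \<in> hedges K - I")
        case True
        then show ?thesis using Mo[OF fT] Mo[OF True] d2 fT h by simp
      next
        case False
        then show ?thesis using Mo[OF fT] Mfs[OF h(2) False] dU[OF fT h(3)] by simp
      qed
    next
      case fF: False
      show ?thesis
      proof (cases "g \<in> hedges K - I")
        case True
        then show ?thesis using Mo[OF True] Mfs[OF h(1) fF] dU[OF True h(4)] by blast
      next
        case False
        then have "g = fs" "f = fs" using h(1,2) fF E' by blast+
        then show ?thesis using h(5) by simp
      qed
    qed
  next
    fix f g assume h: "f \<in> hedges K'" "g \<in> hedges K'" "f \<noteq> g" "f \<inter> g \<noteq> {}"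
    show "\<exists>x\<in>M' f. \<exists>y\<in>M' g. primal_adj (hdual H) x y"
    proof (cases "f \<in> hedges K - I")
      case fT: True
      show ?thesis
      proof (cases "g \<in> hedges K - I")
        case True
        then show ?thesis using Mo[OF fT] Mo[OF True] d3 fT h(3,4) by simp
      next
        case False
        then have "g = fs" using h(2) E' by blast
        then show ?thesis using adjU[OF fT] Mo[OF fT] Mfs[OF h(2) False] h(4) by simp
      qed
    next
      case fF: False
      then have "f = fs" using h(1) E' by blast
      show ?thesis
      proof (cases "g \<in> hedges K - I")
        case gT: True
        then have "g \<inter> fs \<noteq> {}" using h(4) \<open>f = fs\<close> by blast
        then obtain x y where xy: "x \<in> M g" "y \<in> \<Union>(M ` I)" "primal_adj (hdual H) x y"
          using adjU[OF gT] by blast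
        have "primal_adj (hdual H) y x" using adj_sym[OF xy(3)] .
        then show ?thesis using xy Mo[OF gT] Mfs[OF h(1) fF] by blast
      next
        case False
        then have "g = fs" using h(2) E' by blast
        then show ?thesis using h(3) \<open>f = fs\<close> by simp
      qed
    qed
  qed
  then show ?thesis by blast
qed

lemma dil_main:
  assumes "dilution_step\<^sup>*\<^sup>* H K" "is_hypergraph H"
  shows "(\<exists>M. dinv H K M) \<and> hverts K \<subseteq> hverts H \<and>
         (hedges K \<noteq> {} \<longrightarrow> hedges H \<noteq> {} \<or> hverts H \<noteq> {})"
  using assms(1)
proof (induction rule: rtranclp_induct)
  case base then show ?case using dinv_base[OF assms(2)] by blast
next
  case (step K K')
  have "hverts K' \<subseteq> hverts K \<and> (hedges K' \<noteq> {} \<longrightarrow> hedges K \<noteq> {} \<or> hverts K \<noteq> {})"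
    using step(2) by cases (auto simp: hverts_def hedges_def)
  then show ?case using step dinv_step by blast
qed

lemma deg_adj:
  assumes "is_hypergraph H" "hdegree H = 2" "hverts H \<noteq> {}"
  shows "\<exists>x y. primal_adj (hdual H) x y"
proof -
  have "finite (hverts H)" using assms(1) by (simp add: is_hypergraph_def)
  then have "hdegree H \<in> (\<lambda>v. card (inc H v)) ` hverts H"
    unfolding hdegree_def using assms(3) by (intro Max_in) auto
  then obtain w where w: "w \<in> hverts H" "card (inc H w) = 2" using assms(2) by auto
  then obtain x y where "inc H w = {x, y}" "x \<noteq> y" by (meson card_2_iff)
  then have "x \<in> hedges H" "y \<in> hedges H" "x \<in> inc H w" "y \<in> inc H w" "x \<noteq> y"
    by (auto simp: inc_def)
  then have "primal_adj (hdual H) x y" using w unfolding primal_adj_def by auto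
  then show ?thesis by blast
qed

lemma single_conn: "x \<in> hedges H \<Longrightarrow> primal_connected_set (hdual H) {x}"
  unfolding primal_connected_set_def by auto

theorem lemmaA1:
  fixes G :: "'b hypergraph" and H :: "'a hypergraph"
  assumes "is_graph G" and "graph_connected G"
    and "is_hypergraph H" and "hdegree H = 2"
    and "is_dilution (hdual G) H"
  shows "is_minor G (hdual H)"
proof -
  obtain K where K: "dilution_step\<^sup>*\<^sup>* H K" "hiso (hdual G) K"
    using assms(5) unfolding is_dilution_def by blast
  obtain \<phi> where phi: "bij_betw \<phi> (hedges G) (hverts K)"
    "hedges K = (\<lambda>e. \<phi> ` e) ` (inc G ` hverts G)"
  proof -
    have "\<exists>f. bij_betw f (hedges G) (hverts K) \<and> hedges K = (\<lambda>e. f ` e) ` (inc G ` hverts G)"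
      using K(2) unfolding hiso_def by simp
    then show ?thesis using that by blast
  qed
  obtain M where M: "dinv H K M" and VK: "hverts K \<subseteq> hverts H"
    and EK: "hedges K \<noteq> {} \<longrightarrow> hedges H \<noteq> {} \<or> hverts H \<noteq> {}"
    using dil_main[OF K(1) assms(3)] by blast
  have D: "(\<forall>f\<in>hedges K. f \<noteq> {} \<longrightarrow> primal_connected_set (hdual H) (M f)) \<and>
   (\<forall>f\<in>hedges K. \<forall>g\<in>hedges K. f \<noteq> {} \<longrightarrow> g \<noteq> {} \<longrightarrow> f \<noteq> g \<longrightarrow> M f \<inter> M g = {}) \<and>
   (\<forall>f\<in>hedges K. \<forall>g\<in>hedges K. f \<noteq> g \<longrightarrow> f \<inter> g \<noteq> {} \<longrightarrow>
       (\<exists>x\<in>M f. \<exists>y\<in>M g. primal_adj (hdual H) x y))"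
    using M unfolding dinv_def .
  note d1 = dinvD(1)[OF M] and d2 = dinvD(2)[OF M] and d3 = dinvD(3)[OF M]
  let ?V = "hverts G"
  let ?R = "\<lambda>a b. primal_adj G a b \<and> a \<in> ?V \<and> b \<in> ?V"
  have C: "?V \<noteq> {} \<and> ?V \<subseteq> hverts G \<and> (\<forall>x\<in>?V. \<forall>y\<in>?V. ?R\<^sup>*\<^sup>* x y)"
    using assms(2) unfolding graph_connected_def primal_connected_set_def .
  have Vne: "?V \<noteq> {}" using C by (rule conjunct1)
  have Rall0: "\<forall>x\<in>?V. \<forall>y\<in>?V. ?R\<^sup>*\<^sup>* x y" using C by (rule conjunct2[OF conjunct2])
  have Rall: "\<And>x y. x \<in> ?V \<Longrightarrow> y \<in> ?V \<Longrightarrow> ?R\<^sup>*\<^sup>* x y"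
    by (rule Rall0[rule_format])
  have incE: "\<And>v. inc G v \<subseteq> hedges G" by (auto simp: inc_def)
  have adj_sym: "\<And>x y. primal_adj (hdual H) x y \<Longrightarrow> primal_adj (hdual H) y x"
    unfolding primal_adj_def by blast
  show ?thesis
  proof (cases "\<exists>x. ?V = {x}")
    case True
    then obtain x where x: "?V = {x}" by blast
    have "x \<in> ?V" using x by simp
    then have "\<phi> ` inc G x \<in> hedges K" unfolding phi(2) by blast
    then have "hedges K \<noteq> {}" by blast
    then have "hedges H \<noteq> {}"
    proof -
      assume "hedges K \<noteq> {}"
      then have "hedges H \<noteq> {} \<or> hverts H \<noteq> {}" using EK by blast
      then show ?thesis
      proof
        assume "hverts H \<noteq> {}"
        then obtain a b where "primal_adj (hdual H) a b" using deg_adj assms(3,4) by blast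
        then show ?thesis unfolding primal_adj_def by auto
      qed
    qed
    then obtain e where e: "e \<in> hedges H" by blast
    have nadj: "\<not> primal_adj G u v" for u v using x unfolding primal_adj_def by auto
    show ?thesis unfolding is_minor_def
    proof (intro exI[of _ "\<lambda>_. {e}"] conjI ballI allI impI)
      fix w show "primal_connected_set (hdual H) {e}" by (rule single_conn[OF e])
    next
      fix a b assume "a \<in> ?V" "b \<in> ?V" "a \<noteq> b"
      then show "{e} \<inter> {e} = {}" using x by auto
    next
      fix a b assume "primal_adj G a b"
      then show "\<exists>x'\<in>{e}. \<exists>y'\<in>{e}. primal_adj (hdual H) x' y'" using nadj by blast
    qed
  next
    case False
    have incne: "inc G v \<noteq> {}" if v: "v \<in> ?V" for v
    proof -
      obtain u where u: "u \<in> ?V" "u \<noteq> v" using False v by blast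
      have "?R\<^sup>*\<^sup>* v u" by (rule Rall[OF v u(1)])
      then show ?thesis
      proof (cases rule: converse_rtranclpE)
        case base then show ?thesis using u by simp
      next
        case (step z)
        then show ?thesis unfolding primal_adj_def inc_def by auto
      qed
    qed
    show ?thesis
    proof (cases "\<forall>u\<in>?V. \<forall>v\<in>?V. u \<noteq> v \<longrightarrow> inc G u \<noteq> inc G v")
      case True
      have inj: "inj_on \<phi> (hedges G)" using bij_betw_imp_inj_on[OF phi(1)] .
      have neq: "\<phi> ` inc G u \<noteq> \<phi> ` inc G v" if "u \<in> ?V" "v \<in> ?V" "u \<noteq> v" for u v
      proof -
        have "inc G u \<noteq> inc G v" using True that by blast
        then show ?thesis by (simp add: inj_on_image_eq_iff[OF inj incE incE])
      qed
      have inK: "\<phi> ` inc G v \<in> hedges K" if vV: "v \<in> ?V" for v unfolding phi(2) using vV by blast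
      have ne: "\<phi> ` inc G v \<noteq> {}" if vV: "v \<in> ?V" for v using incne[OF vV] by blast
      show ?thesis unfolding is_minor_def
      proof (intro exI[of _ "\<lambda>v. M (\<phi> ` inc G v)"] conjI ballI allI impI)
        fix v assume "v \<in> ?V"
        show "primal_connected_set (hdual H) (M (\<phi> ` inc G v))" by (rule d1[OF inK[OF \<open>v \<in> ?V\<close>] ne[OF \<open>v \<in> ?V\<close>]])
      next
        fix u v assume uv: "u \<in> ?V" "v \<in> ?V" "u \<noteq> v"
        show "M (\<phi> ` inc G u) \<inter> M (\<phi> ` inc G v) = {}" by (rule d2[OF inK[OF uv(1)] inK[OF uv(2)] ne[OF uv(1)] ne[OF uv(2)] neq[OF uv]])
      next
        fix u v assume a: "primal_adj G u v"
        then obtain e where e: "e \<in> hedges G" "u \<in> e" "v \<in> e" "u \<in> ?V" "v \<in> ?V" "u \<noteq> v"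
          unfolding primal_adj_def by blast
        then have "\<phi> e \<in> \<phi> ` inc G u \<inter> \<phi> ` inc G v" by (auto simp: inc_def)
        then show "\<exists>x\<in>M (\<phi> ` inc G u). \<exists>y\<in>M (\<phi> ` inc G v). primal_adj (hdual H) x y"
          using d3[OF inK[OF e(4)] inK[OF e(5)] neq[OF e(4,5,6)]] by blast
      qed
    next
      case False
      then obtain u v where uv: "u \<in> ?V" "v \<in> ?V" "u \<noteq> v" "inc G u = inc G v" by blast
      have reach: "?R\<^sup>*\<^sup>* u w \<Longrightarrow> w \<in> {u, v}" for w
      proof (induction rule: rtranclp_induct)
        case base then show ?case by simp
      next
        case (step z w)
        have "primal_adj G z w" using step(2) by simp
        then obtain e where e: "e \<in> hedges G" "z \<in> e" "w \<in> e" unfolding primal_adj_def by blast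
        have ez: "e \<in> inc G z" using e unfolding inc_def by blast
        have "inc G z = inc G u" using step(3) uv(4) by blast
        then have "e \<in> inc G u" "e \<in> inc G v" using ez uv(4) by simp_all
        then have uve: "u \<in> e" "v \<in> e" unfolding inc_def by simp_all
        have "card e = 2" using assms(1) e(1) unfolding is_graph_def by blast
        then obtain p q where pq: "e = {p, q}" using card_2_iff[of e] by blast
        show ?case using e(3) uve uv(3) unfolding pq by blast
      qed
      have "w \<in> {u, v}" if "w \<in> ?V" for w using reach[OF Rall[OF uv(1) that]] .
      then have Vuv: "?V = {u, v}" using uv by blast
      have "hedges G \<noteq> {}" using incne[OF uv(1)] incE by blast
      then have "hverts K \<noteq> {}" using bij_betw_imp_surj_on[OF phi(1)] by blast
      then have "hverts H \<noteq> {}" using VK by blast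
      then obtain x y where xy: "primal_adj (hdual H) x y" using deg_adj assms(3,4) by blast
      then have xyE: "x \<in> hedges H" "y \<in> hedges H" "x \<noteq> y" unfolding primal_adj_def by auto
      show ?thesis unfolding is_minor_def
      proof (intro exI[of _ "\<lambda>z. if z = u then {x} else {y}"] conjI ballI allI impI)
        fix w assume "w \<in> ?V"
        then show "primal_connected_set (hdual H) (if w = u then {x} else {y})"
          using single_conn[OF xyE(1)] single_conn[OF xyE(2)] by simp
      next
        fix a b assume "a \<in> ?V" "b \<in> ?V" "a \<noteq> b"
        then show "(if a = u then {x} else {y}) \<inter> (if b = u then {x} else {y}) = {}"
          using Vuv xyE by auto
      next
        fix a b assume "primal_adj G a b"
        then have "a \<in> {u, v}" "b \<in> {u, v}" "a \<noteq> b" using Vuv unfolding primal_adj_def by auto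
        then show "\<exists>x'\<in>(if a = u then {x} else {y}). \<exists>y'\<in>(if b = u then {x} else {y}).
            primal_adj (hdual H) x' y'"
          using xy adj_sym[OF xy] uv by (cases "a = u") auto
      qed
    qed
  qed
qed

end
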